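(* Let $v:\mathbb{R}\times\mathscr{Z}_s\to\mathscr{Z}_{-\sigma}$ be a Borel vector field which is bounded on bounded sets, let $I$ be a bounded open interval and $t_0\in I$. Assume there exist a Borel set $\mathcal{A}\subset\mathscr{Z}_s$ and a Borel map $\phi:\bar I\times\mathcal{A}\to\mathscr{Z}_s$, bounded on bounded sets, such that for every $x\in\mathcal{A}$ the curve $t\in\bar I\mapsto\phi(t,x)$ is a weak solution of $\dot u=v(t,u)$ with $\phi(t_0,x)=x$. Then for every Borel probability measure $\nu$ on $\mathscr{Z}_s$ concentrated on $\mathcal{A}$ and on a bounded subset of $\mathscr{Z}_s$, the curve $\mu_t:=\phi(t,\cdot)_\sharp\nu$, $t\in I$, solves the Liouville equation on $I$, satisfies $\mu_{t_0}=\nu$, and $t\mapsto\mu_t$ is strongly narrowly continuous in the Borel probability measures on $\mathscr{Z}_{-\sigma}$.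
   Context: Let $\mathscr{Z}_0$ be a separable complex Hilbert space, $A$ self-adjoint with $A\ge c\,1$, $c>0$; $\mathscr{Z}_\tau$ is the completion of $D(A^{\tau/2})$ for $\langle A^{\tau/2}\cdot,A^{\tau/2}\cdot\rangle_{\mathscr{Z}_0}$; fix $0\le s\le\sigma$, so $\mathscr{Z}_s\subset\mathscr{Z}_0\subset\mathscr{Z}_{-\sigma}$. Weak solution on $I$: $u\in L^\infty(I,\mathscr{Z}_s)\cap W^{1,\infty}(I,\mathscr{Z}_{-\sigma})$ with $\dot u(t)=v(t,u(t))$ for a.e. $t\in I$. Liouville equation on $I$: $\int_I\int_{\mathscr{Z}_{-\sigma}}(\partial_t\varphi+\mathrm{Re}\langle v(t,x),\nabla\varphi(t,x)\rangle_{\mathscr{Z}_{-\sigma}})d\mu_t dt=0$ for all $\varphi(t,x)=\psi(t,\pi(x))$ with $\psi\in C_0^\infty(I\times\mathbb{R}^n)$, $\pi(x)=(\mathrm{Re}\langle x,e_i\rangle_{\mathscr{Z}_{-\sigma}})_{i=1}^n$ for an orthonormal family $(e_i)$ of the real Hilbert space $(\mathscr{Z}_{-\sigma},\mathrm{Re}\langle\cdot,\cdot\rangle_{\mathscr{Z}_{-\sigma}})$, $\nabla$ the real gradient. Strong narrow continuity means $t\mapsto\int f\,d\mu_t$ continuous for every bounded norm-continuous $f$ on $\mathscr{Z}_{-\sigma}$. *)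

theory Defs
  imports "HOL-Probability.Probability"
begin

text \<open>Essentially bounded, (strongly) measurable functions on an interval J
  (the space L-infinity(J, X) for a separable Banach space X), pointwise representatives.\<close>
definition Linfty_on :: "real set \<Rightarrow> (real \<Rightarrow> 'x::real_normed_vector) \<Rightarrow> bool" where
  "Linfty_on J u \<longleftrightarrow> u \<in> borel_measurable (restrict_space lebesgue J) \<and>
     (\<exists>M. AE t in lebesgue. t \<in> J \<longrightarrow> norm (u t) \<le> M)"

text \<open>Weak solution on the interval J of  u' = v(t,u), where iota embeds Z_s into Z_{-sigma}:
  u is in L-infinity(J,Z_s); iota o u is in W^{1,infty}(J,Z_{-sigma}) (we use the continuous
  representative), i.e. iota o u is the primitive of some w in L-infinity(J,Z_{-sigma})
  (its weak derivative); and w(t) = v(t,u(t)) for a.e. t in J.\<close>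
definition weak_solution ::
  "('a::real_normed_vector \<Rightarrow> 'b::real_normed_vector) \<Rightarrow> (real \<Rightarrow> 'a \<Rightarrow> 'b) \<Rightarrow> real set
     \<Rightarrow> (real \<Rightarrow> 'a) \<Rightarrow> bool"
  where "weak_solution \<iota> v J u \<longleftrightarrow>
    Linfty_on J u \<and>
    (\<exists>w. Linfty_on J w \<and>
         (\<forall>s\<in>J. \<forall>t\<in>J. s \<le> t \<longrightarrow> (w has_integral (\<iota> (u t) - \<iota> (u s))) {s..t}) \<and>
         (AE t in lebesgue. t \<in> J \<longrightarrow> w t = v t (u t)))"

fun Ck :: "nat \<Rightarrow> ('e::euclidean_space \<Rightarrow> real) \<Rightarrow> bool" where
  "Ck 0 f \<longleftrightarrow> continuous_on UNIV f"
| "Ck (Suc k) f \<longleftrightarrow> (\<forall>x. f differentiable (at x)) \<and>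
      (\<forall>i\<in>Basis. Ck k (\<lambda>x. frechet_derivative f (at x) i))"

definition smooth_fun :: "('e::euclidean_space \<Rightarrow> real) \<Rightarrow> bool" where
  "smooth_fun f \<longleftrightarrow> (\<forall>k. Ck k f)"

text \<open>psi in C_0^infty(I x R^n): smooth with compact support contained in I x R^n
  (extended by zero outside).\<close>
definition test_fun :: "real set \<Rightarrow> (real \<times> (real^'n) \<Rightarrow> real) \<Rightarrow> bool" where
  "test_fun I \<psi> \<longleftrightarrow> smooth_fun \<psi> \<and> compact (closure {p. \<psi> p \<noteq> 0}) \<and>
      closure {p. \<psi> p \<noteq> 0} \<subseteq> I \<times> UNIV"

text \<open>Orthonormal family of the real Hilbert space (Re of the inner product).\<close>
definition orthonormal_fam :: "('n \<Rightarrow> 'b::real_inner) \<Rightarrow> bool" where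
  "orthonormal_fam e \<longleftrightarrow> (\<forall>i j. inner (e i) (e j) = (if i = j then 1 else 0))"

definition cyl_proj :: "('n::finite \<Rightarrow> 'b::real_inner) \<Rightarrow> 'b \<Rightarrow> real^'n" where
  "cyl_proj e x = (\<chi> i. inner x (e i))"

definition cyl_fun :: "(real \<times> (real^'n) \<Rightarrow> real) \<Rightarrow> ('n::finite \<Rightarrow> 'b::real_inner) \<Rightarrow> real \<Rightarrow> 'b \<Rightarrow> real" where
  "cyl_fun \<psi> e t x = \<psi> (t, cyl_proj e x)"

definition real_grad :: "('b::real_inner \<Rightarrow> real) \<Rightarrow> 'b \<Rightarrow> 'b" where
  "real_grad f x = (THE D. GDERIV f x :> D)"

definition liouville_integrand ::
  "(real \<Rightarrow> 'a \<Rightarrow> 'b::real_inner) \<Rightarrow> ('a \<Rightarrow> 'b) \<Rightarrow> (real \<times> (real^'n) \<Rightarrow> real) \<Rightarrow> ('n::finite \<Rightarrow> 'b)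
     \<Rightarrow> real \<Rightarrow> 'a \<Rightarrow> real" where
  "liouville_integrand v \<iota> \<psi> e t x =
     deriv (\<lambda>\<tau>. cyl_fun \<psi> e \<tau> (\<iota> x)) t + inner (v t x) (real_grad (cyl_fun \<psi> e t) (\<iota> x))"

text \<open>Liouville equation on I for a curve of measures mu_t on Z_s (regarded, via iota, as
  measures on Z_{-sigma}), tested with cylindrical functions built on an orthonormal family
  indexed by the finite type 'n.\<close>
definition liouville_eq ::
  "real set \<Rightarrow> (real \<Rightarrow> 'a \<Rightarrow> 'b::real_inner) \<Rightarrow> ('a \<Rightarrow> 'b) \<Rightarrow> (real \<Rightarrow> 'a measure)
     \<Rightarrow> ('n::finite \<Rightarrow> 'b) \<Rightarrow> bool" where
  "liouville_eq I v \<iota> \<mu> e \<longleftrightarrow> orthonormal_fam e \<longrightarrow>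
     (\<forall>\<psi>. test_fun I \<psi> \<longrightarrow>
        (AE t in lebesgue. t \<in> I \<longrightarrow> integrable (\<mu> t) (liouville_integrand v \<iota> \<psi> e t)) \<and>
        set_integrable lebesgue I (\<lambda>t. LINT x|\<mu> t. liouville_integrand v \<iota> \<psi> e t x) \<and>
        (LINT t:I|lebesgue. (LINT x|\<mu> t. liouville_integrand v \<iota> \<psi> e t x)) = 0)"

definition strongly_narrowly_continuous ::
  "real set \<Rightarrow> ('a \<Rightarrow> 'b::real_normed_vector) \<Rightarrow> (real \<Rightarrow> 'a measure) \<Rightarrow> bool" where
  "strongly_narrowly_continuous I \<iota> \<mu> \<longleftrightarrow>
     (\<forall>f::'b \<Rightarrow> real. continuous_on UNIV f \<and> bounded (range f) \<longrightarrow>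
        continuous_on I (\<lambda>t. LINT y|distr (\<mu> t) borel \<iota>. f y))"

end

theory Submission
  imports Defs
begin


lemma deriv0_from_est:
  fixes f :: "real \<Rightarrow> real"
  assumes "\<And>e. e > 0 \<Longrightarrow> \<exists>d>0. \<forall>t\<in>S. \<bar>t - s\<bar> < d \<longrightarrow> \<bar>f t - f s\<bar> \<le> e * \<bar>t - s\<bar>"
  shows "(f has_field_derivative 0) (at s within S)"
proof -
  have "((\<lambda>t. (f t - f s) / (t - s)) \<longlongrightarrow> 0) (at s within S)"
  proof (rule tendstoI)
    fix e :: real assume e: "e > 0"
    then obtain d where d: "d > 0" "\<forall>t\<in>S. \<bar>t - s\<bar> < d \<longrightarrow> \<bar>f t - f s\<bar> \<le> (e/2) * \<bar>t - s\<bar>"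
      using assms[of "e/2"] by auto
    show "\<forall>\<^sub>F t in at s within S. dist ((f t - f s) / (t - s)) 0 < e"
      unfolding eventually_at
    proof (intro exI[of _ d] conjI ballI impI allI)
      fix t assume t: "t \<in> S" "t \<noteq> s \<and> dist t s < d"
      then have "\<bar>f t - f s\<bar> \<le> (e/2) * \<bar>t - s\<bar>" using d by (auto simp: dist_real_def)
      moreover have "\<bar>t - s\<bar> > 0" using t by (auto simp: dist_real_def)
      ultimately have "\<bar>f t - f s\<bar> / \<bar>t - s\<bar> \<le> e/2" by (simp add: divide_le_eq)
      moreover have "dist ((f t - f s) / (t - s)) 0 = \<bar>f t - f s\<bar> / \<bar>t - s\<bar>"
        by (simp add: dist_real_def abs_divide)
      ultimately show "dist ((f t - f s) / (t - s)) 0 < e" using e by linarith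
    qed (use d in auto)
  qed
  then show ?thesis by (simp add: has_field_derivative_iff)
qed

lemma linear_inner_rep:
  fixes L :: "'e::euclidean_space \<Rightarrow> real"
  assumes "linear L"
  shows "L h = h \<bullet> (\<Sum>i\<in>Basis. L i *\<^sub>R i)"
proof -
  have "L h = L (\<Sum>i\<in>Basis. (h \<bullet> i) *\<^sub>R i)" by (simp add: euclidean_representation)
  also have "\<dots> = (\<Sum>i\<in>Basis. (h \<bullet> i) * L i)"
    using assms by (simp add: linear_sum linear_scale)
  also have "\<dots> = h \<bullet> (\<Sum>i\<in>Basis. L i *\<^sub>R i)"
    by (simp add: inner_sum_right mult.commute)
  finally show ?thesis .
qed

lemma core:
  fixes \<psi> :: "real \<times> 'e::euclidean_space \<Rightarrow> real" and D :: "real \<times> 'e \<Rightarrow> real \<times> 'e \<Rightarrow> real"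
    and p q :: "real \<Rightarrow> 'e"
  assumes der: "\<And>x. (\<psi> has_derivative D x) (at x)"
    and contD: "continuous_on UNIV (\<lambda>x. \<Sum>i\<in>Basis. D x i *\<^sub>R i)"
    and ab: "a \<le> b"
    and qb: "\<And>r. r \<in> {a..b} \<Longrightarrow> norm (q r) \<le> M"
    and pq: "\<And>s t. a \<le> s \<Longrightarrow> s \<le> t \<Longrightarrow> t \<le> b \<Longrightarrow> (q has_integral (p t - p s)) {s..t}"
    and Fint: "(\<lambda>r. D (r, p r) (1, q r)) integrable_on {a..b}"
  shows "((\<lambda>r. D (r, p r) (1, q r)) has_integral (\<psi> (b, p b) - \<psi> (a, p a))) {a..b}"
proof -
  define Dv where "Dv x = (\<Sum>i\<in>Basis. D x i *\<^sub>R i)" for x :: "real \<times> 'e"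
  have bl: "bounded_linear (D x)" for x using der[of x] has_derivative_bounded_linear by blast
  have lin: "linear (D x)" for x using bl[of x] bounded_linear.linear by blast
  have Drep: "D x h = h \<bullet> Dv x" for x h unfolding Dv_def by (rule linear_inner_rep[OF lin])
  have Ddiff: "\<bar>D x h - D y h\<bar> \<le> norm h * norm (Dv x - Dv y)" for x y h
  proof -
    have "\<bar>D x h - D y h\<bar> = \<bar>h \<bullet> (Dv x - Dv y)\<bar>" by (simp add: Drep inner_diff_right)
    also have "\<dots> \<le> norm h * norm (Dv x - Dv y)" by (rule Cauchy_Schwarz_ineq2)
    finally show ?thesis .
  qed
  define X where "X r = (r, p r)" for r
  define F where "F r = D (X r) (1, q r)" for r
  have M0: "0 \<le> M" using qb[of a] ab by (auto intro: order_trans[OF norm_ge_zero])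
  have plip: "norm (p t - p s) \<le> M * (t - s)" if "a \<le> s" "s \<le> t" "t \<le> b" for s t
  proof -
    have "norm (p t - p s) \<le> M * measure lborel (cbox s t)"
      by (rule has_integral_bound[OF M0]) (use pq[OF that] qb that in auto)
    then show ?thesis using that by simp
  qed
  define P where "P = norm (p a) + M * (b - a)"
  have pP: "norm (p r) \<le> P" if "r \<in> {a..b}" for r
  proof -
    have "norm (p r) \<le> norm (p a) + norm (p r - p a)" using norm_triangle_ineq2[of "p r" "p a"] by simp
    also have "\<dots> \<le> norm (p a) + M * (r - a)" using plip[of a r] that by auto
    also have "\<dots> \<le> P" unfolding P_def using that M0 by (auto intro: mult_left_mono)
    finally show ?thesis .
  qed
  define K where "K = {a..b} \<times> cball (0::'e) P"
  have Kc: "compact K" unfolding K_def by (intro compact_Times) auto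
  have Kv: "convex K" unfolding K_def by (intro convex_Times) auto
  have XK: "X r \<in> K" if "r \<in> {a..b}" for r using pP[OF that] that by (auto simp: K_def X_def)
  define c where "c = 1 + M"
  have c0: "c > 0" using M0 by (simp add: c_def)
  have Xlip: "norm (X t - X s) \<le> c * (t - s)" if "a \<le> s" "s \<le> t" "t \<le> b" for s t
  proof -
    have "norm (X t - X s) \<le> norm (t - s) + norm (p t - p s)"
      unfolding X_def using norm_Pair_le[of "t - s" "p t - p s"] by simp
    also have "\<dots> \<le> (t - s) + M * (t - s)" using plip[OF that] that by simp
    finally show ?thesis by (simp add: c_def algebra_simps)
  qed
  have uc: "uniformly_continuous_on K Dv"
    unfolding Dv_def by (rule compact_uniformly_continuous[OF continuous_on_subset[OF contD] Kc]) auto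
  have Fint': "F integrable_on {s..t}" if "a \<le> s" "t \<le> b" for s t
    using integrable_subinterval_real[OF Fint[folded X_def, folded F_def]] that by auto
  have est: "\<exists>d>0. \<forall>s t. a \<le> s \<longrightarrow> s \<le> t \<longrightarrow> t \<le> b \<longrightarrow> t - s < d \<longrightarrow>
      \<bar>\<psi> (X t) - \<psi> (X s) - integral {s..t} F\<bar> \<le> e * (t - s)" if e: "e > 0" for e
  proof -
    have "e / (2*c) > 0" using e c0 by simp
    then obtain d' where d': "d' > 0" "\<And>x x'. x\<in>K \<Longrightarrow> x'\<in>K \<Longrightarrow> dist x' x < d' \<Longrightarrow> dist (Dv x') (Dv x) < e / (2*c)"
      using uc unfolding uniformly_continuous_on_def by metis
    define d where "d = d' / c"
    have d0: "d > 0" using d' c0 by (simp add: d_def)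
    show ?thesis
    proof (intro exI[of _ d] conjI allI impI d0)
      fix s t assume st: "a \<le> s" "s \<le> t" "t \<le> b" "t - s < d"
      have sK: "X s \<in> K" using XK st by auto
      have cd: "c * (t - s) < d'" using st c0 by (simp add: d_def field_simps)
      have close: "norm (Dv z - Dv (X s)) \<le> e/(2*c)" if "z \<in> K" "norm (z - X s) \<le> c*(t-s)" for z
      proof -
        have "dist z (X s) < d'" using that cd by (simp add: dist_norm)
        then have "dist (Dv z) (Dv (X s)) < e/(2*c)" using d'(2)[OF sK that(1)] by simp
        then show ?thesis by (simp add: dist_norm)
      qed
      define u where "u = X t - X s"
      have nu: "norm u \<le> c * (t - s)" unfolding u_def using Xlip st by auto
      have A: "\<bar>\<psi> (X t) - \<psi> (X s) - D (X s) u\<bar> \<le> (e/2) * (t - s)"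
      proof -
        define g where "g l = \<psi> (X s + l *\<^sub>R u) - l * D (X s) u" for l :: real
        have gd: "(g has_derivative (\<lambda>h. h * (D (X s + l *\<^sub>R u) u - D (X s) u))) (at l)" for l
        proof -
          have "((\<lambda>l. \<psi> (X s + l *\<^sub>R u)) has_derivative (\<lambda>h. D (X s + l *\<^sub>R u) (h *\<^sub>R u))) (at l)"
            by (rule has_derivative_compose[where f="\<lambda>l. X s + l *\<^sub>R u", OF _ der, simplified o_def])
              (auto intro!: derivative_eq_intros)
          then have "(g has_derivative (\<lambda>h. D (X s + l *\<^sub>R u) (h *\<^sub>R u) - h * D (X s) u)) (at l)"
            unfolding g_def by (auto intro!: derivative_eq_intros)
          moreover have "(\<lambda>h. D (X s + l *\<^sub>R u) (h *\<^sub>R u) - h * D (X s) u) = (\<lambda>h. h * (D (X s + l *\<^sub>R u) u - D (X s) u))"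
            using lin by (auto simp: linear_scale algebra_simps)
          ultimately show ?thesis by simp
        qed
        have contg: "continuous_on {0..1} g"
          using gd by (intro continuous_at_imp_continuous_on ballI has_derivative_continuous) blast
        obtain l where l: "l \<in> {0<..<1}" "norm (g 1 - g 0) \<le> norm (1 * (D (X s + l *\<^sub>R u) u - D (X s) u))"
          using mvt_general[OF zero_less_one contg gd] by auto
        have "g 1 - g 0 = \<psi> (X t) - \<psi> (X s) - D (X s) u" by (simp add: g_def u_def)
        moreover have zK: "X s + l *\<^sub>R u \<in> K"
        proof -
          have "X s + l *\<^sub>R u = (1 - l) *\<^sub>R X s + l *\<^sub>R X t" by (simp add: u_def algebra_simps)
          then show ?thesis using Kv XK[of s] XK[of t] st l(1) unfolding convex_def by auto
        qed
        moreover have "norm (X s + l *\<^sub>R u - X s) \<le> c * (t - s)"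
          using l(1) nu mult_left_le_one_le[of "norm u" l] by auto
        ultimately have "norm (Dv (X s + l *\<^sub>R u) - Dv (X s)) \<le> e/(2*c)"
          using close by blast
        then have "\<bar>D (X s + l *\<^sub>R u) u - D (X s) u\<bar> \<le> norm u * (e/(2*c))"
          using Ddiff[of "X s + l *\<^sub>R u" u "X s"] by (meson mult_left_mono norm_ge_zero order_trans)
        also have "\<dots> \<le> c * (t - s) * (e/(2*c))" using nu e c0 by (intro mult_right_mono) auto
        also have "\<dots> = (e/2) * (t - s)" using c0 by (simp add: field_simps)
        finally show ?thesis using l(2) \<open>g 1 - g 0 = _\<close> by simp
      qed
      have blD: "bounded_linear (\<lambda>z. D (X s) (0, z))"
        using bounded_linear_compose[OF bl[of "X s"] bounded_linear_Pair[OF bounded_linear_zero bounded_linear_ident]]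
        by (simp add: o_def)
      have I1: "((\<lambda>r. D (X s) (1, q r)) has_integral D (X s) u) {s..t}"
      proof -
        have a1: "((\<lambda>r. D (X s) (1, 0)) has_integral (t - s) * D (X s) (1, 0)) {s..t}"
          using has_integral_const_real[of "D (X s) (1, 0)" s t] st by simp
        have a2: "((\<lambda>r. D (X s) (0, q r)) has_integral D (X s) (0, p t - p s)) {s..t}"
          using has_integral_linear[OF pq[of s t] blD] st by (simp add: o_def)
        have eq1: "D (X s) (1, q r) = D (X s) (1, 0) + D (X s) (0, q r)" for r
          using linear_add[OF lin, of "X s" "(1,0)" "(0, q r)"] by simp
        have "u = (t - s) *\<^sub>R (1, 0) + (0, p t - p s)" by (simp add: u_def X_def)
        then have "D (X s) u = D (X s) ((t - s) *\<^sub>R (1, 0)) + D (X s) (0, p t - p s)"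
          by (simp only: linear_add[OF lin])
        then have eq2: "D (X s) u = (t - s) * D (X s) (1, 0) + D (X s) (0, p t - p s)"
          by (simp only: linear_scale[OF lin] real_scaleR_def)
        show ?thesis unfolding eq1 eq2 by (rule has_integral_add[OF a1 a2])
      qed
      have I2: "(F has_integral integral {s..t} F) {s..t}"
        using Fint'[of s t] st by (simp add: integrable_integral)
      have B: "\<bar>D (X s) u - integral {s..t} F\<bar> \<le> (e/2) * (t - s)"
      proof -
        have "norm (D (X s) u - integral {s..t} F) \<le> (e/2) * measure lborel (cbox s t)"
        proof (rule has_integral_bound[where f="\<lambda>r. D (X s) (1, q r) - F r"])
          show "0 \<le> e/2" using e by simp
          show "((\<lambda>r. D (X s) (1, q r) - F r) has_integral D (X s) u - integral {s..t} F) (cbox s t)"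
            using has_integral_diff[OF I1 I2] by simp
          fix r assume r: "r \<in> cbox s t"
          then have r': "a \<le> s" "s \<le> r" "r \<le> t" "t \<le> b" using st by auto
          have "norm (X r - X s) \<le> c * (r - s)" using Xlip r' by auto
          also have "\<dots> \<le> c * (t - s)" using r' c0 by simp
          finally have "norm (Dv (X r) - Dv (X s)) \<le> e/(2*c)" using close XK r' by auto
          then have n1: "norm (Dv (X s) - Dv (X r)) \<le> e/(2*c)" by (simp add: norm_minus_commute)
          have n2: "norm ((1::real), q r) \<le> c" using norm_Pair_le[of "1::real" "q r"] qb[of r] r' by (simp add: c_def)
          have "\<bar>D (X s) (1, q r) - F r\<bar> \<le> norm ((1::real), q r) * norm (Dv (X s) - Dv (X r))"
            unfolding F_def by (rule Ddiff)
          also have "\<dots> \<le> c * (e/(2*c))" using n1 n2 c0 by (intro mult_mono) auto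
          also have "\<dots> = e/2" using c0 by simp
          finally show "norm (D (X s) (1, q r) - F r) \<le> e/2" by simp
        qed
        then show ?thesis using st by simp
      qed
      show "\<bar>\<psi> (X t) - \<psi> (X s) - integral {s..t} F\<bar> \<le> e * (t - s)"
        using A B by linarith
    qed
  qed
  define H where "H t = integral {a..t} F" for t
  have Hs: "H t = H s + integral {s..t} F" if "a \<le> s" "s \<le> t" "t \<le> b" for s t
    unfolding H_def using Henstock_Kurzweil_Integration.integral_combine[OF that(1,2) Fint'[of a t, OF order_refl that(3)]] by simp
  have dz: "((\<lambda>t. \<psi> (X t) - H t) has_field_derivative 0) (at s within {a..b})" if s: "s \<in> {a..b}" for s
  proof (rule deriv0_from_est)
    fix e :: real assume e: "e > 0"
    obtain d where d: "d > 0" "\<And>s t. a \<le> s \<Longrightarrow> s \<le> t \<Longrightarrow> t \<le> b \<Longrightarrow> t - s < d \<Longrightarrow>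
      \<bar>\<psi> (X t) - \<psi> (X s) - integral {s..t} F\<bar> \<le> e * (t - s)" using est[OF e] by blast
    show "\<exists>d>0. \<forall>t\<in>{a..b}. \<bar>t - s\<bar> < d \<longrightarrow> \<bar>\<psi> (X t) - H t - (\<psi> (X s) - H s)\<bar> \<le> e * \<bar>t - s\<bar>"
    proof (intro exI[of _ d] conjI ballI impI d(1))
      fix t assume t: "t \<in> {a..b}" "\<bar>t - s\<bar> < d"
      show "\<bar>\<psi> (X t) - H t - (\<psi> (X s) - H s)\<bar> \<le> e * \<bar>t - s\<bar>"
      proof (cases "s \<le> t")
        case True
        then show ?thesis using d(2)[of s t] Hs[of s t] s t by (simp add: abs_if split: if_splits)
      next
        case False
        then show ?thesis using d(2)[of t s] Hs[of t s] s t by (simp add: abs_if abs_minus_commute split: if_splits)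
      qed
    qed
  qed
  obtain C where C: "\<forall>t\<in>{a..b}. \<psi> (X t) - H t = C"
    using has_field_derivative_zero_constant[of "{a..b}" "\<lambda>t. \<psi> (X t) - H t"] dz by auto
  have "H a = 0" by (simp add: H_def)
  then have "H b = \<psi> (X b) - \<psi> (X a)" using C[rule_format, of a] C[rule_format, of b] ab by auto
  moreover have "(F has_integral H b) {a..b}" unfolding H_def using Fint'[of a b] by (simp add: integrable_integral)
  ultimately show ?thesis unfolding F_def[abs_def] X_def by simp
qed

lemma cyl_proj_sum: "cyl_proj e x = (\<Sum>i\<in>UNIV. inner x (e i) *\<^sub>R axis i (1::real))"
  by (simp add: cyl_proj_def vec_eq_iff axis_def sum_component if_distrib cong: if_cong)

lemma bl_cyl_proj: "bounded_linear (cyl_proj e)"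
  unfolding cyl_proj_sum[abs_def]
  by (intro bounded_linear_sum) (use bounded_linear_compose[OF bounded_linear_scaleR_left bounded_linear_inner_left] in auto)

lemma lin_expand:
  fixes L :: "real^'n \<Rightarrow> real"
  assumes "linear L"
  shows "L (cyl_proj e h) = (\<Sum>i\<in>UNIV. inner h (e i) * L (axis i 1))"
  unfolding cyl_proj_sum using assms by (simp add: linear_sum linear_scale)

lemma liouville_integrand_eq:
  fixes \<psi> :: "real \<times> (real^'n) \<Rightarrow> real" and D :: "real \<times> (real^'n) \<Rightarrow> real \<times> (real^'n) \<Rightarrow> real"
    and e :: "'n \<Rightarrow> 'b::real_inner"
  assumes der: "\<And>x. (\<psi> has_derivative D x) (at x)"
  shows "liouville_integrand v \<iota> \<psi> e t x = D (t, cyl_proj e (\<iota> x)) (1, cyl_proj e (v t x))"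
proof -
  have lin: "linear (D y)" for y using der[of y] has_derivative_bounded_linear bounded_linear.linear by blast
  have linw: "linear (\<lambda>w. D y (0, w))" for y
    by (rule linear_compose[OF _ lin[of y], unfolded o_def]) (simp add: linear_iff)
  define z where "z = \<iota> x"
  define c where "c = cyl_proj e z"
  have "((\<lambda>\<tau>. \<psi> (\<tau>, c)) has_derivative (\<lambda>h. D (t, c) (h, 0))) (at t)"
    by (rule has_derivative_compose[where f="\<lambda>\<tau>. (\<tau>, c)", OF _ der, simplified])
      (auto intro!: derivative_eq_intros)
  moreover have "(\<lambda>h. D (t, c) (h, 0)) = (*) (D (t, c) (1, 0))"
  proof
    fix h :: real
    have "D (t, c) (h, 0) = D (t, c) (h *\<^sub>R (1, 0))" by simp
    also have "\<dots> = h * D (t, c) (1, 0)" by (simp only: linear_scale[OF lin] real_scaleR_def)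
    finally show "D (t, c) (h, 0) = D (t, c) (1, 0) * h" by simp
  qed
  ultimately have "((\<lambda>\<tau>. \<psi> (\<tau>, c)) has_field_derivative D (t, c) (1, 0)) (at t)"
    by (simp add: has_field_derivative_def)
  then have d1: "deriv (\<lambda>\<tau>. cyl_fun \<psi> e \<tau> (\<iota> x)) t = D (t, c) (1, 0)"
    unfolding cyl_fun_def c_def z_def by (rule DERIV_imp_deriv)
  define G where "G = (\<Sum>i\<in>UNIV. D (t, c) (0, axis i 1) *\<^sub>R e i)"
  have "(cyl_fun \<psi> e t has_derivative (\<lambda>h. D (t, c) (0, cyl_proj e h))) (at z)"
    unfolding cyl_fun_def[abs_def] c_def
    by (rule has_derivative_compose[where f="\<lambda>z. (t, cyl_proj e z)", OF _ der, simplified])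
      (auto intro!: derivative_eq_intros bounded_linear.has_derivative[OF bl_cyl_proj])
  moreover have "(\<lambda>h. D (t, c) (0, cyl_proj e h)) = (\<lambda>h. inner h G)"
    by (rule ext, subst lin_expand[OF linw]) (simp add: G_def inner_sum_right mult.commute)
  ultimately have gd: "GDERIV (cyl_fun \<psi> e t) z :> G" by (simp add: gderiv_def)
  have "real_grad (cyl_fun \<psi> e t) z = G"
    unfolding real_grad_def
  proof (rule the_equality)
    show "GDERIV (cyl_fun \<psi> e t) z :> G" by (rule gd)
    fix G' assume "GDERIV (cyl_fun \<psi> e t) z :> G'"
    then have "(\<lambda>h. inner h G') = (\<lambda>h. inner h G)"
      using gd unfolding gderiv_def by (rule has_derivative_unique)
    then have "inner (G' - G) G' = inner (G' - G) G" by metis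
    then have "inner (G' - G) (G' - G) = 0" by (simp add: inner_diff_right)
    then show "G' = G" by simp
  qed
  then have "inner (v t x) (real_grad (cyl_fun \<psi> e t) (\<iota> x)) = D (t, c) (0, cyl_proj e (v t x))"
    by (subst lin_expand[OF linw]) (simp add: G_def z_def inner_sum_right mult.commute)
  then have "liouville_integrand v \<iota> \<psi> e t x = D (t, c) (1, 0) + D (t, c) (0, cyl_proj e (v t x))"
    unfolding liouville_integrand_def d1 by simp
  also have "\<dots> = D (t, c) (1, cyl_proj e (v t x))"
    using linear_add[OF lin, of "(t, c)" "(1, 0)" "(0, cyl_proj e (v t x))"] by simp
  finally show ?thesis by (simp add: c_def z_def)
qed



lemma bm_pair:
  fixes f :: "'m \<Rightarrow> 'x::second_countable_topology" and g :: "'m \<Rightarrow> 'y::second_countable_topology"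
  assumes "f \<in> borel_measurable M" "g \<in> borel_measurable M"
  shows "(\<lambda>x. (f x, g x)) \<in> borel_measurable M"
  using measurable_Pair[OF assms] by (simp add: borel_prod)

lemma bm_cont: "continuous_on UNIV f \<Longrightarrow> g \<in> borel_measurable M \<Longrightarrow> (\<lambda>x. f (g x)) \<in> borel_measurable M"
  using measurable_compose[of g M borel f borel] borel_measurable_continuous_onI by blast

theorem mainTheorem5:
  fixes \<iota> :: "'a::{real_inner, polish_space} \<Rightarrow> 'b::{real_inner, polish_space}"
    and v :: "real \<Rightarrow> 'a \<Rightarrow> 'b"
    and a b t\<^sub>0 :: real
    and \<A> :: "'a set"
    and \<phi> :: "real \<Rightarrow> 'a \<Rightarrow> 'a"
    and \<nu> :: "'a measure"
    and e :: "'n::finite \<Rightarrow> 'b"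
  assumes emb: "bounded_linear \<iota>" "inj \<iota>" "closure (range \<iota>) = UNIV"
    and v_borel: "(\<lambda>p. v (fst p) (snd p)) \<in> borel_measurable (borel :: (real \<times> 'a) measure)"
    and v_bdd: "\<forall>B :: (real \<times> 'a) set. bounded B \<longrightarrow> bounded ((\<lambda>p. v (fst p) (snd p)) ` B)"
    and I: "a < b" "t\<^sub>0 \<in> {a<..<b}"
    and A_borel: "\<A> \<in> sets borel"
    and phi_borel: "(\<lambda>p. \<phi> (fst p) (snd p)) \<in> borel_measurable (restrict_space borel ({a..b} \<times> \<A>))"
    and phi_bdd: "\<forall>B. B \<subseteq> {a..b} \<times> \<A> \<longrightarrow> bounded B \<longrightarrow> bounded ((\<lambda>p. \<phi> (fst p) (snd p)) ` B)"
    and phi_sol: "\<forall>x\<in>\<A>. weak_solution \<iota> v {a..b} (\<lambda>t. \<phi> t x) \<and> \<phi> t\<^sub>0 x = x"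
    and nu: "prob_space \<nu>" "sets \<nu> = sets borel"
    and nu_A: "AE x in \<nu>. x \<in> \<A>"
    and nu_bdd: "\<exists>R. AE x in \<nu>. norm x \<le> R"
  shows "liouville_eq {a<..<b} v \<iota> (\<lambda>t. distr (restrict_space \<nu> \<A>) borel (\<phi> t)) e
       \<and> distr (restrict_space \<nu> \<A>) borel (\<phi> t\<^sub>0) = \<nu>
       \<and> (\<forall>t\<in>{a<..<b}. prob_space (distr (distr (restrict_space \<nu> \<A>) borel (\<phi> t)) borel \<iota>))
       \<and> strongly_narrowly_continuous {a<..<b} \<iota> (\<lambda>t. distr (restrict_space \<nu> \<A>) borel (\<phi> t))"
proof -
  interpret P: prob_space \<nu> by (rule nu(1))
  have spaceNu: "space \<nu> = UNIV" using sets_eq_imp_space_eq[OF nu(2)] by simp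
  have A_sets: "\<A> \<in> sets \<nu>" using A_borel nu(2) by simp
  have A_int: "\<A> \<inter> space \<nu> \<in> sets \<nu>" using A_sets spaceNu by simp
  have ab: "a \<le> b" using I by simp
  have cIota: "continuous_on UNIV \<iota>" by (rule linear_continuous_on[OF emb(1)])
  have mIota: "\<iota> \<in> borel_measurable borel" by (rule borel_measurable_continuous_onI[OF cIota])
  define \<phi>' where "\<phi>' p = (if p \<in> {a..b} \<times> \<A> then \<phi> (fst p) (snd p) else 0)" for p :: "real \<times> 'a"
  have ab_sets: "{a..b} \<times> \<A> \<in> sets (borel :: (real \<times> 'a) measure)"
    using A_borel by (intro borel_Times) auto
  have mphi': "\<phi>' \<in> borel_measurable (borel :: (real \<times> 'a) measure)"
    using phi_borel ab_sets unfolding \<phi>'_def by (subst (asm) measurable_restrict_space_iff) auto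
  have phi'_eq: "\<phi>' (t, y) = \<phi> t y" if "t \<in> {a..b}" "y \<in> \<A>" for t y
    using that by (simp add: \<phi>'_def)
  have msec: "(\<lambda>y. f (t, y)) \<in> borel_measurable borel" if "f \<in> borel_measurable (borel :: (real \<times> 'a) measure)" for f :: "real \<times> 'a \<Rightarrow> 'c::topological_space" and t
  proof -
    have "(\<lambda>y::'a. (t, y)) \<in> borel_measurable borel"
      by (rule borel_measurable_continuous_onI) (intro continuous_intros)
    then show ?thesis using measurable_compose[OF _ that] by blast
  qed
  have mnu: "g \<in> borel_measurable \<nu>" if "g \<in> borel_measurable borel" for g :: "'a \<Rightarrow> 'c::topological_space"
    using that by (simp add: measurable_cong_sets[OF nu(2) refl])
  have mres: "g \<in> borel_measurable (restrict_space \<nu> \<A>)" if "g \<in> borel_measurable borel" for g :: "'a \<Rightarrow> 'c::topological_space"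
    using measurable_restrict_space1[OF mnu[OF that]] .
  have mphi_t: "\<phi> t \<in> measurable (restrict_space \<nu> \<A>) borel" if "t \<in> {a..b}" for t
  proof -
    have "(\<lambda>y. \<phi>' (t, y)) \<in> measurable (restrict_space \<nu> \<A>) borel"
      by (rule mres[OF msec[OF mphi']])
    then show ?thesis
      by (rule measurable_cong[THEN iffD1, rotated]) (use that spaceNu in \<open>auto simp: phi'_eq space_restrict_space\<close>)
  qed
  have bdd_traj: "\<exists>V. \<forall>r\<in>{a..b}. \<forall>y\<in>Y. norm (\<phi> r y) \<le> V \<and> norm (v r (\<phi> r y)) \<le> V"
    if Y: "Y \<subseteq> \<A>" "bounded Y" for Y
  proof -
    have "bounded ((\<lambda>p. \<phi> (fst p) (snd p)) ` ({a..b} \<times> Y))"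
      using phi_bdd Y by (auto intro!: bounded_Times)
    then obtain V1 where V1: "\<forall>z\<in>(\<lambda>p. \<phi> (fst p) (snd p)) ` ({a..b} \<times> Y). norm z \<le> V1"
      unfolding bounded_iff by blast
    have "bounded ({a..b} \<times> (\<lambda>p. \<phi> (fst p) (snd p)) ` ({a..b} \<times> Y))"
      using \<open>bounded ((\<lambda>p. \<phi> (fst p) (snd p)) ` ({a..b} \<times> Y))\<close> by (auto intro!: bounded_Times)
    then have "bounded ((\<lambda>p. v (fst p) (snd p)) ` ({a..b} \<times> (\<lambda>p. \<phi> (fst p) (snd p)) ` ({a..b} \<times> Y)))"
      using v_bdd by blast
    then obtain V2 where V2: "\<forall>z\<in>(\<lambda>p. v (fst p) (snd p)) ` ({a..b} \<times> (\<lambda>p. \<phi> (fst p) (snd p)) ` ({a..b} \<times> Y)). norm z \<le> V2"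
      unfolding bounded_iff by blast
    show ?thesis
    proof (intro exI[of _ "max V1 V2"] ballI conjI)
      fix r y assume r: "r \<in> {a..b}" and y: "y \<in> Y"
      have "\<phi> r y \<in> (\<lambda>p. \<phi> (fst p) (snd p)) ` ({a..b} \<times> Y)" using r y by force
      then have "norm (\<phi> r y) \<le> V1" using V1 by blast
      then show "norm (\<phi> r y) \<le> max V1 V2" by simp
      have "v r (\<phi> r y) \<in> (\<lambda>p. v (fst p) (snd p)) ` ({a..b} \<times> (\<lambda>p. \<phi> (fst p) (snd p)) ` ({a..b} \<times> Y))"
        using r \<open>\<phi> r y \<in> _\<close> by force
      then have "norm (v r (\<phi> r y)) \<le> V2" using V2 by blast
      then show "norm (v r (\<phi> r y)) \<le> max V1 V2" by simp
    qed
  qed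
  have sol_int: "((\<lambda>r. v r (\<phi> r y)) has_integral (\<iota> (\<phi> t y) - \<iota> (\<phi> s y))) {s..t}"
    if y: "y \<in> \<A>" and st: "a \<le> s" "s \<le> t" "t \<le> b" for y s t
  proof -
    obtain w where w: "\<forall>s\<in>{a..b}. \<forall>t\<in>{a..b}. s \<le> t \<longrightarrow> (w has_integral (\<iota> (\<phi> t y) - \<iota> (\<phi> s y))) {s..t}"
      and wae: "AE t in lebesgue. t \<in> {a..b} \<longrightarrow> w t = v t (\<phi> t y)"
      using phi_sol y unfolding weak_solution_def by blast
    obtain N where N: "{x \<in> space lebesgue. \<not> (x \<in> {a..b} \<longrightarrow> w x = v x (\<phi> x y))} \<subseteq> N"
      "emeasure lebesgue N = 0" "N \<in> sets lebesgue"
      using AE_E[OF wae] by blast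
    have negN: "negligible N" using N by (simp add: negligible_iff_null_sets null_sets_def)
    show ?thesis
    proof (rule has_integral_spike[OF negN _ w[rule_format, of s t]])
      fix x assume "x \<in> {s..t} - N"
      then show "v x (\<phi> x y) = w x" using N(1) st by (auto simp: subset_iff) (metis order_trans)
    qed (use st in auto)
  qed
  have contphi: "continuous_on {a..b} (\<lambda>t. \<iota> (\<phi> t y))" if y: "y \<in> \<A>" for y
  proof -
    obtain V where V: "\<forall>r\<in>{a..b}. norm (v r (\<phi> r y)) \<le> V"
      using bdd_traj[of "{y}"] y by auto
    have V0: "0 \<le> V" using V ab by (auto intro: order_trans[OF norm_ge_zero])
    have "V-lipschitz_on {a..b} (\<lambda>t. \<iota> (\<phi> t y))"
    proof (rule lipschitz_onI[OF _ V0])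
      have *: "dist (\<iota> (\<phi> t y)) (\<iota> (\<phi> s y)) \<le> V * dist t s" if "s \<in> {a..b}" "t \<in> {a..b}" "s \<le> t" for s t
      proof -
        have "norm (\<iota> (\<phi> t y) - \<iota> (\<phi> s y)) \<le> V * measure lborel (cbox s t)"
          by (rule has_integral_bound[OF V0]) (use sol_int[OF y, of s t] that V in auto)
        then show ?thesis using that by (simp add: dist_norm dist_real_def)
      qed
      fix s t assume "s \<in> {a..b}" "t \<in> {a..b}"
      then show "dist (\<iota> (\<phi> s y)) (\<iota> (\<phi> t y)) \<le> V * dist s t"
        using *[of s t] *[of t s] by (cases "s \<le> t") (auto simp: dist_commute)
    qed
    then show ?thesis by (rule lipschitz_on_continuous_on)
  qed
  have mIota': "\<iota> \<in> measurable borel borel" using mIota by simp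
  have spA: "space (restrict_space \<nu> \<A>) = \<A>" by (simp add: space_restrict_space spaceNu)
  have C2: "distr (restrict_space \<nu> \<A>) borel (\<phi> t\<^sub>0) = \<nu>"
  proof (rule measure_eqI)
    show "sets (distr (restrict_space \<nu> \<A>) borel (\<phi> t\<^sub>0)) = sets \<nu>" using nu(2) by simp
    fix X assume X: "X \<in> sets (distr (restrict_space \<nu> \<A>) borel (\<phi> t\<^sub>0))"
    then have Xb: "X \<in> sets borel" by simp
    have t0: "t\<^sub>0 \<in> {a..b}" using I by auto
    have "emeasure (distr (restrict_space \<nu> \<A>) borel (\<phi> t\<^sub>0)) X
        = emeasure (restrict_space \<nu> \<A>) (\<phi> t\<^sub>0 -` X \<inter> space (restrict_space \<nu> \<A>))"
      by (rule emeasure_distr[OF mphi_t[OF t0] Xb])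
    also have "\<phi> t\<^sub>0 -` X \<inter> space (restrict_space \<nu> \<A>) = X \<inter> \<A>"
    proof -
      have "\<forall>y\<in>\<A>. \<phi> t\<^sub>0 y = y" using phi_sol by blast
      then show ?thesis unfolding spA by auto
    qed
    also have "emeasure (restrict_space \<nu> \<A>) (X \<inter> \<A>) = emeasure \<nu> (X \<inter> \<A>)"
      by (rule emeasure_restrict_space[OF A_int]) auto
    also have "\<dots> = emeasure \<nu> X"
      by (rule emeasure_eq_AE) (use nu_A Xb A_borel nu(2) in auto)
    finally show "emeasure (distr (restrict_space \<nu> \<A>) borel (\<phi> t\<^sub>0)) X = emeasure \<nu> X" .
  qed
  have rprob: "prob_space (restrict_space \<nu> \<A>)"
  proof (rule prob_spaceI)
    have "emeasure (restrict_space \<nu> \<A>) \<A> = emeasure \<nu> \<A>"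
      by (rule emeasure_restrict_space[OF A_int]) auto
    also have "\<dots> = emeasure \<nu> (space \<nu>)"
      by (rule emeasure_eq_AE) (use nu_A A_sets in auto)
    also have "\<dots> = 1" by (rule P.emeasure_space_1)
    finally show "emeasure (restrict_space \<nu> \<A>) (space (restrict_space \<nu> \<A>)) = 1" using spA by simp
  qed
  have C3: "\<forall>t\<in>{a<..<b}. prob_space (distr (distr (restrict_space \<nu> \<A>) borel (\<phi> t)) borel \<iota>)"
  proof
    fix t :: real assume "t \<in> {a<..<b}"
    then have "t \<in> {a..b}" by auto
    show "prob_space (distr (distr (restrict_space \<nu> \<A>) borel (\<phi> t)) borel \<iota>)"
      by (rule prob_space.prob_space_distr[OF prob_space.prob_space_distr[OF rprob mphi_t[OF \<open>t \<in> {a..b}\<close>]]])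
        (simp add: mIota')
  qed
  interpret R: prob_space "restrict_space \<nu> \<A>" by (rule rprob)
  have C4: "strongly_narrowly_continuous {a<..<b} \<iota> (\<lambda>t. distr (restrict_space \<nu> \<A>) borel (\<phi> t))"
    unfolding strongly_narrowly_continuous_def
  proof (intro allI impI)
    fix f :: "'b \<Rightarrow> real" assume f: "continuous_on UNIV f \<and> bounded (range f)"
    then obtain Bf where Bf: "\<And>x. norm (f x) \<le> Bf" unfolding bounded_iff by blast
    have mf: "f \<in> borel_measurable borel" using f borel_measurable_continuous_onI by blast
    have mfi: "(\<lambda>x. f (\<iota> x)) \<in> borel_measurable borel"
      using measurable_compose[OF mIota' mf] .
    define k where "k t = (\<integral>y. f (\<iota> (\<phi>' (t, y))) \<partial>restrict_space \<nu> \<A>)" for t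
    have mk: "(\<lambda>y. f (\<iota> (\<phi>' (t, y)))) \<in> borel_measurable (restrict_space \<nu> \<A>)" for t
      by (rule mres) (rule measurable_compose[OF msec[OF mphi'] mfi])
    have eqk: "(LINT y|distr (distr (restrict_space \<nu> \<A>) borel (\<phi> t)) borel \<iota>. f y) = k t"
      if "t \<in> {a<..<b}" for t
    proof -
      have t: "t \<in> {a..b}" using that by auto
      have "(LINT y|distr (distr (restrict_space \<nu> \<A>) borel (\<phi> t)) borel \<iota>. f y)
          = (LINT x|distr (restrict_space \<nu> \<A>) borel (\<phi> t). f (\<iota> x))"
        by (rule integral_distr[OF _ mf]) (simp add: mIota')
      also have "\<dots> = (LINT y|restrict_space \<nu> \<A>. f (\<iota> (\<phi> t y)))"
        by (rule integral_distr[OF mphi_t[OF t] mfi])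
      also have "\<dots> = k t" unfolding k_def
        by (rule Bochner_Integration.integral_cong) (use t spA in \<open>auto simp: phi'_eq\<close>)
      finally show ?thesis .
    qed
    have ck: "continuous_on {a<..<b} k"
      unfolding continuous_on_eq_continuous_at[OF open_greaterThanLessThan]
    proof
      fix t assume t: "t \<in> {a<..<b}"
      show "isCont k t" unfolding continuous_at_sequentially
      proof (intro allI impI)
        fix X :: "nat \<Rightarrow> real" assume X: "X \<longlonglongrightarrow> t"
        have ev: "eventually (\<lambda>i. X i \<in> {a<..<b}) sequentially"
          using topological_tendstoD[OF X open_greaterThanLessThan t] .
        show "(k \<circ> X) \<longlonglongrightarrow> k t" unfolding k_def o_def
        proof (rule integral_dominated_convergence[where w="\<lambda>_. Bf"])
          show "(\<lambda>y. f (\<iota> (\<phi>' (t, y)))) \<in> borel_measurable (restrict_space \<nu> \<A>)" by (rule mk)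
          show "(\<lambda>y. f (\<iota> (\<phi>' (X i, y)))) \<in> borel_measurable (restrict_space \<nu> \<A>)" for i by (rule mk)
          show "integrable (restrict_space \<nu> \<A>) (\<lambda>_. Bf)" by simp
          show "AE y in restrict_space \<nu> \<A>. norm (f (\<iota> (\<phi>' (X i, y)))) \<le> Bf" for i
            using Bf by simp
          show "AE y in restrict_space \<nu> \<A>. (\<lambda>i. f (\<iota> (\<phi>' (X i, y)))) \<longlonglongrightarrow> f (\<iota> (\<phi>' (t, y)))"
          proof (rule AE_I2)
            fix y assume "y \<in> space (restrict_space \<nu> \<A>)"
            then have y: "y \<in> \<A>" using spA by simp
            have "isCont (\<lambda>r. \<iota> (\<phi> r y)) t"
              using continuous_on_interior[OF contphi[OF y]] t by simp
            then have "isCont (\<lambda>r. f (\<iota> (\<phi> r y))) t"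
              by (rule isCont_o2) (use f in \<open>simp add: continuous_on_eq_continuous_at\<close>)
            then have "(\<lambda>i. f (\<iota> (\<phi> (X i) y))) \<longlonglongrightarrow> f (\<iota> (\<phi> t y))"
              using X by (rule isCont_tendsto_compose)
            moreover have "eventually (\<lambda>i. f (\<iota> (\<phi> (X i) y)) = f (\<iota> (\<phi>' (X i, y)))) sequentially"
              using ev by eventually_elim (use y in \<open>auto simp: phi'_eq\<close>)
            ultimately have "(\<lambda>i. f (\<iota> (\<phi>' (X i, y)))) \<longlonglongrightarrow> f (\<iota> (\<phi> t y))"
              by (rule Lim_transform_eventually)
            then show "(\<lambda>i. f (\<iota> (\<phi>' (X i, y)))) \<longlonglongrightarrow> f (\<iota> (\<phi>' (t, y)))"
              using t y by (simp add: phi'_eq)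
          qed
        qed
      qed
    qed
    then show "continuous_on {a<..<b} (\<lambda>t. LINT y|distr (distr (restrict_space \<nu> \<A>) borel (\<phi> t)) borel \<iota>. f y)"
      using continuous_on_eq[OF ck, of "\<lambda>t. LINT y|distr (distr (restrict_space \<nu> \<A>) borel (\<phi> t)) borel \<iota>. f y"] eqk by auto
  qed
  have liou: "liouville_eq {a<..<b} v \<iota> (\<lambda>t. distr (restrict_space \<nu> \<A>) borel (\<phi> t)) e"
    unfolding liouville_eq_def
  proof (intro impI allI)
    fix \<psi> :: "real \<times> (real^'n) \<Rightarrow> real"
    assume tf: "test_fun {a<..<b} \<psi>"
    have ck1: "Ck (Suc 0) \<psi>" using tf unfolding test_fun_def smooth_fun_def by blast
    then have diffpsi: "\<And>x. \<psi> differentiable (at x)"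
      and contpart: "\<And>i. i \<in> Basis \<Longrightarrow> continuous_on UNIV (\<lambda>x. frechet_derivative \<psi> (at x) i)"
      by auto
    define D where "D x = frechet_derivative \<psi> (at x)" for x
    have der: "(\<psi> has_derivative D x) (at x)" for x
      unfolding D_def using diffpsi frechet_derivative_works by blast
    have contD: "continuous_on UNIV (\<lambda>x. \<Sum>i\<in>Basis. D x i *\<^sub>R i)"
      unfolding D_def by (intro continuous_intros contpart)
    define Dv where "Dv x = (\<Sum>i\<in>Basis. D x i *\<^sub>R i)" for x
    have lin: "linear (D x)" for x using der[of x] has_derivative_bounded_linear bounded_linear.linear by blast
    have Drep: "D x h = h \<bullet> Dv x" for x h unfolding Dv_def by (rule linear_inner_rep[OF lin])
    have contDv: "continuous_on UNIV Dv" using contD unfolding Dv_def[abs_def] .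
    define \<pi> where "\<pi> = cyl_proj e"
    have blpi: "bounded_linear \<pi>" unfolding \<pi>_def by (rule bl_cyl_proj)
    have cpi: "continuous_on UNIV \<pi>" by (rule linear_continuous_on[OF blpi])
    define \<Phi> where "\<Phi> t x = ((1::real), \<pi> (v t x)) \<bullet> Dv (t, \<pi> (\<iota> x))" for t x
    have LI: "liouville_integrand v \<iota> \<psi> e t = \<Phi> t" for t
      unfolding \<Phi>_def \<pi>_def by (rule ext, subst liouville_integrand_eq[OF der], simp add: Drep)
    define K3 where "K3 p = (((1::real), \<pi> (fst (snd p))) \<bullet> Dv (fst p, \<pi> (\<iota> (snd (snd p)))))" for p :: "real \<times> 'b \<times> 'a"
    have cK3: "continuous_on UNIV K3"
    proof -
      have c1: "continuous_on UNIV (\<lambda>p::real \<times> 'b \<times> 'a. \<pi> (fst (snd p)))"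
        by (rule continuous_on_compose2[OF cpi]) (auto intro!: continuous_intros)
      have c2: "continuous_on UNIV (\<lambda>p::real \<times> 'b \<times> 'a. \<iota> (snd (snd p)))"
        by (rule continuous_on_compose2[OF cIota]) (auto intro!: continuous_intros)
      have c3: "continuous_on UNIV (\<lambda>p::real \<times> 'b \<times> 'a. \<pi> (\<iota> (snd (snd p))))"
        by (rule continuous_on_compose2[OF cpi c2]) auto
      have c4: "continuous_on UNIV (\<lambda>p::real \<times> 'b \<times> 'a. Dv (fst p, \<pi> (\<iota> (snd (snd p)))))"
        by (rule continuous_on_compose2[OF contDv]) (auto intro!: continuous_intros c3)
      show ?thesis unfolding K3_def by (intro continuous_intros c1 c4)
    qed
    have K3_eq: "\<Phi> t x = K3 (t, v t x, x)" for t x by (simp add: \<Phi>_def K3_def)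
    have mfst: "fst \<in> borel_measurable (borel :: (real \<times> 'a) measure)"
      by (rule borel_measurable_continuous_onI) (intro continuous_intros)
    have msnd: "snd \<in> borel_measurable (borel :: (real \<times> 'a) measure)"
      by (rule borel_measurable_continuous_onI) (intro continuous_intros)
    have mPhit: "\<Phi> t \<in> borel_measurable borel" for t
    proof -
      have "(\<lambda>x. v t x) \<in> borel_measurable borel" using msec[OF v_borel, of t] by simp
      then have "(\<lambda>x. K3 (t, v t x, x)) \<in> borel_measurable borel"
        by (intro bm_cont[OF cK3] bm_pair) auto
      then show ?thesis by (simp add: K3_eq[abs_def])
    qed
    define G where "G p = \<Phi> (fst p) (\<phi>' p)" for p
    have mG: "G \<in> borel_measurable (borel :: (real \<times> 'a) measure)"
    proof -
      have "(\<lambda>p. v (fst p) (\<phi>' p)) \<in> borel_measurable (borel :: (real \<times> 'a) measure)"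
        using measurable_compose[OF bm_pair[OF mfst mphi'] v_borel] by simp
      then have "(\<lambda>p. K3 (fst p, v (fst p) (\<phi>' p), \<phi>' p)) \<in> borel_measurable (borel :: (real \<times> 'a) measure)"
        by (intro bm_cont[OF cK3] bm_pair mfst mphi')
      moreover have "G = (\<lambda>p. K3 (fst p, v (fst p) (\<phi>' p), \<phi>' p))"
        by (simp add: G_def K3_eq fun_eq_iff)
      ultimately show ?thesis by simp
    qed
    have G_eq: "G (t, y) = \<Phi> t (\<phi> t y)" if "t \<in> {a..b}" "y \<in> \<A>" for t y
      using that by (simp add: G_def phi'_eq)
    obtain R where R: "AE x in \<nu>. norm x \<le> R" using nu_bdd by blast
    define S where "S = \<A> \<inter> cball 0 R"
    have S_sets: "S \<in> sets borel" unfolding S_def using A_borel by auto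
    have AES: "AE y in \<nu>. y \<in> S" using nu_A R by eventually_elim (auto simp: S_def)
    obtain V where V: "\<forall>r\<in>{a..b}. \<forall>y\<in>S. norm (\<phi> r y) \<le> V \<and> norm (v r (\<phi> r y)) \<le> V"
      using bdd_traj[of S] by (auto simp: S_def bounded_Int)
    obtain Kp where Kp: "Kp > 0" "\<And>x. norm (\<pi> x) \<le> norm x * Kp"
      using bounded_linear.pos_bounded[OF blpi] by blast
    obtain Ki where Ki: "Ki > 0" "\<And>x. norm (\<iota> x) \<le> norm x * Ki"
      using bounded_linear.pos_bounded[OF emb(1)] by blast
    define Q where "Q = V * Ki * Kp"
    have Kc: "compact ({a..b} \<times> cball (0::real^'n) Q)" by (intro compact_Times) auto
    have "bounded (Dv ` ({a..b} \<times> cball (0::real^'n) Q))"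
      by (intro compact_imp_bounded compact_continuous_image continuous_on_subset[OF contDv] Kc) auto
    then obtain CD where CD: "\<And>x. x \<in> {a..b} \<times> cball (0::real^'n) Q \<Longrightarrow> norm (Dv x) \<le> CD"
      unfolding bounded_iff by blast
    define C where "C = max 0 ((1 + V * Kp) * CD)"
    have Phi_bd: "\<bar>\<Phi> r (\<phi> r y)\<bar> \<le> C" if r: "r \<in> {a..b}" and y: "y \<in> S" for r y
    proof -
      have Vr: "norm (\<phi> r y) \<le> V" "norm (v r (\<phi> r y)) \<le> V" using V r y by auto
      have "norm (\<pi> (\<iota> (\<phi> r y))) \<le> norm (\<iota> (\<phi> r y)) * Kp" by (rule Kp(2))
      also have "\<dots> \<le> (norm (\<phi> r y) * Ki) * Kp" using Ki(2) Kp(1) by (intro mult_right_mono) auto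
      also have "\<dots> \<le> Q" unfolding Q_def using Vr Ki(1) Kp(1) by (intro mult_right_mono) auto
      finally have inK: "(r, \<pi> (\<iota> (\<phi> r y))) \<in> {a..b} \<times> cball 0 Q" using r by auto
      have nD: "norm (Dv (r, \<pi> (\<iota> (\<phi> r y)))) \<le> CD" by (rule CD[OF inK])
      have "norm ((1::real), \<pi> (v r (\<phi> r y))) \<le> 1 + norm (\<pi> (v r (\<phi> r y)))"
        using norm_Pair_le[of "1::real" "\<pi> (v r (\<phi> r y))"] by simp
      also have "\<dots> \<le> 1 + V * Kp" using Kp(2)[of "v r (\<phi> r y)"] Vr Kp(1)
        by (smt (verit, best) mult_right_mono)
      finally have n1: "norm ((1::real), \<pi> (v r (\<phi> r y))) \<le> 1 + V * Kp" .
      have "\<bar>\<Phi> r (\<phi> r y)\<bar> \<le> norm ((1::real), \<pi> (v r (\<phi> r y))) * norm (Dv (r, \<pi> (\<iota> (\<phi> r y))))"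
        unfolding \<Phi>_def by (rule Cauchy_Schwarz_ineq2)
      also have "\<dots> \<le> (1 + V * Kp) * CD" using n1 nD order_trans[OF norm_ge_zero n1] by (intro mult_mono) auto
      finally show ?thesis by (simp add: C_def)
    qed
    have C0: "0 \<le> C" by (simp add: C_def)
    define H where "H p = indicator ({a<..<b} \<times> S) p * G p" for p
    have prod_sets: "{a<..<b} \<times> S \<in> sets (borel :: (real \<times> 'a) measure)"
      using S_sets by (intro borel_Times) auto
    have mHb: "H \<in> borel_measurable (borel :: (real \<times> 'a) measure)"
      unfolding H_def using prod_sets mG by (intro borel_measurable_times borel_measurable_indicator) auto
    have sets_prod: "sets (lborel \<Otimes>\<^sub>M \<nu>) = sets (borel :: (real \<times> 'a) measure)"
    proof -
      have "sets (lborel \<Otimes>\<^sub>M \<nu>) = sets (borel \<Otimes>\<^sub>M (borel :: 'a measure))"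
        by (rule sets_pair_measure_cong[OF sets_lborel nu(2)])
      also have "(borel \<Otimes>\<^sub>M (borel :: 'a measure)) = (borel :: (real \<times> 'a) measure)" by (rule borel_prod)
      finally show ?thesis .
    qed
    have mH: "H \<in> borel_measurable (lborel \<Otimes>\<^sub>M \<nu>)"
      using mHb by (simp add: measurable_cong_sets[OF sets_prod refl])
    have Hbd: "norm (H p) \<le> norm (C * indicator ({a..b} \<times> UNIV) p)" for p
    proof (cases "p \<in> {a<..<b} \<times> S")
      case True
      then obtain t y where p: "p = (t, y)" "t \<in> {a<..<b}" "y \<in> S" by auto
      then have "G (t, y) = \<Phi> t (\<phi> t y)" using G_eq[of t y] by (auto simp: S_def)
      then show ?thesis using p Phi_bd[of t y] C0 by (auto simp: H_def indicator_def)
    next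
      case False
      then show ?thesis by (simp add: H_def)
    qed
    interpret PS: pair_sigma_finite lborel \<nu>
      by (simp add: pair_sigma_finite_def lborel.sigma_finite_measure_axioms P.sigma_finite_measure_axioms)
    have intH: "integrable (lborel \<Otimes>\<^sub>M \<nu>) H"
    proof (rule Bochner_Integration.integrable_bound[OF _ mH])
      have ab_sets2: "{a..b} \<times> UNIV \<in> sets (lborel \<Otimes>\<^sub>M \<nu>)"
        using sets_prod by (simp add: borel_Times)
      have "emeasure (lborel \<Otimes>\<^sub>M \<nu>) ({a..b} \<times> space \<nu>) = emeasure lborel {a..b} * emeasure \<nu> (space \<nu>)"
        by (rule P.emeasure_pair_measure_Times) auto
      then have "emeasure (lborel \<Otimes>\<^sub>M \<nu>) ({a..b} \<times> UNIV) < \<infinity>"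
        using spaceNu ab P.emeasure_space_1 by (simp add: ennreal_mult_less_top)
      then have "integrable (lborel \<Otimes>\<^sub>M \<nu>) (indicator ({a..b} \<times> UNIV) :: _ \<Rightarrow> real)"
        using ab_sets2 by (intro integrable_real_indicator) auto
      then show "integrable (lborel \<Otimes>\<^sub>M \<nu>) (\<lambda>p. C * indicator ({a..b} \<times> UNIV) p)"
        by (rule integrable_mult_right)
      show "AE p in lborel \<Otimes>\<^sub>M \<nu>. norm (H p) \<le> norm (C * indicator ({a..b} \<times> UNIV) p)"
        using Hbd by simp
    qed
    have psi0: "\<psi> (c, z) = 0" if "c = a \<or> c = b" for c z
    proof (rule ccontr)
      assume "\<psi> (c, z) \<noteq> 0"
      then have "(c, z) \<in> closure {p. \<psi> p \<noteq> 0}" by - (rule subsetD[OF closure_subset], simp)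
      moreover have "closure {p. \<psi> p \<noteq> 0} \<subseteq> {a<..<b} \<times> UNIV" using tf unfolding test_fun_def by (elim conjE)
      ultimately have "(c, z) \<in> {a<..<b} \<times> UNIV" by (rule rev_subsetD)
      then have "c \<in> {a<..<b}" by simp
      then show False using that by auto
    qed
    have mGsec: "(\<lambda>t. G (t, y)) \<in> borel_measurable borel" for y
    proof -
      have "(\<lambda>t::real. (t, y)) \<in> borel_measurable borel"
        by (rule borel_measurable_continuous_onI) (intro continuous_intros)
      then show ?thesis using measurable_compose[OF _ mG] by blast
    qed
    have inner0: "(\<integral>t. H (t, y) \<partial>lborel) = 0" for y
    proof (cases "y \<in> S")
      case False
      then show ?thesis by (simp add: H_def indicator_times)
    next
      case True
      then have yA: "y \<in> \<A>" by (simp add: S_def)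
      define p where "p t = \<pi> (\<iota> (\<phi> t y))" for t
      define q where "q t = \<pi> (v t (\<phi> t y))" for t
      define F where "F t = D (t, p t) (1, q t)" for t
      have FG: "G (t, y) = F t" if "t \<in> {a..b}" for t
        using G_eq[OF that yA] by (simp add: F_def \<Phi>_def Drep p_def q_def)
      have Ht: "H (t, y) = indicator {a<..<b} t * F t" for t
        using FG[of t] True by (auto simp: H_def indicator_times indicator_def)
      have ind_int: "integrable lborel (\<lambda>t. C * indicator {a..b} t :: real)"
        by (intro integrable_mult_right integrable_real_indicator) (use ab in auto)
      have siF: "set_integrable lborel {a..b} F"
        unfolding set_integrable_def
      proof -
        have "integrable lborel (\<lambda>t. indicator {a..b} t * G (t, y))"
        proof (rule Bochner_Integration.integrable_bound[OF ind_int])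
          show "(\<lambda>t. indicator {a..b} t * G (t, y)) \<in> borel_measurable lborel"
            using mGsec[of y] by (intro borel_measurable_times borel_measurable_indicator) auto
          show "AE t in lborel. norm (indicator {a..b} t * G (t, y)) \<le> norm (C * indicator {a..b} t)"
          proof (rule AE_I2)
            fix t show "norm (indicator {a..b} t * G (t, y)) \<le> norm (C * indicator {a..b} t)"
              using Phi_bd[of t y] True G_eq[of t y] yA C0 by (auto simp: indicator_def)
          qed
        qed
        then show "integrable lborel (\<lambda>t. indicator {a..b} t *\<^sub>R F t)"
          by (rule Bochner_Integration.integrable_cong[THEN iffD1, rotated 2])
            (auto simp: FG indicator_def)
      qed
      have siF2: "set_integrable lborel {a<..<b} F"
        by (rule set_integrable_subset[OF siF]) auto
      have Fint: "F integrable_on {a..b}" by (rule set_borel_integral_eq_integral(1)[OF siF])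
      have qb: "norm (q r) \<le> V * Kp" if "r \<in> {a..b}" for r
        using Kp(2)[of "v r (\<phi> r y)"] V that True Kp(1) unfolding q_def
        by (smt (verit, best) mult_right_mono)
      have pq: "(q has_integral (p t - p s)) {s..t}" if "a \<le> s" "s \<le> t" "t \<le> b" for s t
        using has_integral_linear[OF sol_int[OF yA that] blpi]
        by (simp add: o_def p_def q_def[abs_def] linear_diff[OF bounded_linear.linear[OF blpi]])
      have "(F has_integral (\<psi> (b, p b) - \<psi> (a, p a))) {a..b}"
        unfolding F_def by (rule core[OF der contD ab qb pq Fint[unfolded F_def]])
      then have "(F has_integral 0) {a..b}" using psi0 by simp
      then have intF0: "integral {a..b} F = 0" by (rule integral_unique)
      have "(\<integral>t. H (t, y) \<partial>lborel) = (\<integral>t. indicator {a<..<b} t *\<^sub>R F t \<partial>lborel)"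
        by (rule Bochner_Integration.integral_cong) (auto simp: Ht)
      also have "\<dots> = (LINT t:{a<..<b}|lborel. F t)" by (simp add: set_lebesgue_integral_def)
      also have "\<dots> = integral {a<..<b} F" by (rule set_borel_integral_eq_integral(2)[OF siF2])
      also have "\<dots> = integral {a..b} F" by (simp add: integral_open_interval_real)
      finally show ?thesis using intF0 by simp
    qed
    define g where "g t = (\<integral>y. H (t, y) \<partial>\<nu>)" for t
    have intg: "integrable lborel g" unfolding g_def by (rule PS.integrable_fst'[OF intH])
    have glb: "g \<in> borel_measurable lborel" using intg by (rule borel_measurable_integrable)
    have totg: "integral\<^sup>L lborel g = 0"
    proof -
      have "integral\<^sup>L lborel g = integral\<^sup>L (lborel \<Otimes>\<^sub>M \<nu>) H" unfolding g_def by (rule PS.integral_fst'[OF intH])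
      also have "\<dots> = (\<integral>y. (\<integral>t. H (t, y) \<partial>lborel) \<partial>\<nu>)"
        using PS.integral_snd[of "\<lambda>t y. H (t, y)"] intH by simp
      also have "\<dots> = 0" by (simp add: inner0)
      finally show ?thesis .
    qed
    have mAG: "(\<lambda>y. indicator \<A> y * G (t, y)) \<in> borel_measurable \<nu>" for t
      by (rule mnu) (use msec[OF mG, of t] A_borel in \<open>intro borel_measurable_times borel_measurable_indicator\<close>)
    have mHt: "(\<lambda>y. H (t, y)) \<in> borel_measurable \<nu>" for t
      by (rule mnu) (rule msec[OF mHb])
    have AEeq: "AE y in \<nu>. indicator \<A> y * G (t, y) = H (t, y)" if "t \<in> {a<..<b}" for t
      using AES by eventually_elim (use that in \<open>auto simp: H_def indicator_def S_def\<close>)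
    have eqt: "(LINT x|distr (restrict_space \<nu> \<A>) borel (\<phi> t). liouville_integrand v \<iota> \<psi> e t x) = g t"
      if t: "t \<in> {a<..<b}" for t
    proof -
      have t': "t \<in> {a..b}" using t by auto
      have "(LINT x|distr (restrict_space \<nu> \<A>) borel (\<phi> t). liouville_integrand v \<iota> \<psi> e t x)
          = (LINT x|distr (restrict_space \<nu> \<A>) borel (\<phi> t). \<Phi> t x)" by (simp add: LI)
      also have "\<dots> = (LINT y|restrict_space \<nu> \<A>. \<Phi> t (\<phi> t y))"
        by (rule integral_distr[OF mphi_t[OF t'] mPhit])
      also have "\<dots> = (LINT y|\<nu>. indicator \<A> y *\<^sub>R \<Phi> t (\<phi> t y))"
        by (rule integral_restrict_space[OF A_int])
      also have "\<dots> = (LINT y|\<nu>. indicator \<A> y * G (t, y))"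
        by (rule Bochner_Integration.integral_cong) (auto simp: G_eq[OF t'] indicator_def)
      also have "\<dots> = g t" unfolding g_def
        by (rule integral_cong_AE[OF mAG mHt AEeq[OF t]])
      finally show ?thesis .
    qed
    have intt: "integrable (distr (restrict_space \<nu> \<A>) borel (\<phi> t)) (liouville_integrand v \<iota> \<psi> e t)"
      if t: "t \<in> {a<..<b}" for t
    proof -
      have t': "t \<in> {a..b}" using t by auto
      have "integrable \<nu> (\<lambda>y. indicator \<A> y * G (t, y))"
      proof (rule P.integrable_const_bound[OF _ mAG])
        show "AE y in \<nu>. norm (indicator \<A> y * G (t, y)) \<le> C"
          using AES by eventually_elim (use Phi_bd t' G_eq in \<open>auto simp: S_def indicator_def\<close>)
      qed
      then have "integrable \<nu> (\<lambda>y. indicator \<A> y *\<^sub>R \<Phi> t (\<phi> t y))"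
        by (rule Bochner_Integration.integrable_cong[THEN iffD1, rotated 2]) (auto simp: G_eq[OF t'] indicator_def)
      then have "integrable (restrict_space \<nu> \<A>) (\<lambda>y. \<Phi> t (\<phi> t y))"
        by (simp add: integrable_restrict_space[OF A_int])
      then show ?thesis unfolding LI by (simp add: integrable_distr_eq[OF mphi_t[OF t'] mPhit])
    qed
    have eqall: "indicator {a<..<b} t *\<^sub>R (LINT x|distr (restrict_space \<nu> \<A>) borel (\<phi> t). liouville_integrand v \<iota> \<psi> e t x) = g t" for t
    proof (cases "t \<in> {a<..<b}")
      case True
      then show ?thesis using eqt by simp
    next
      case False
      then show ?thesis by (simp add: g_def H_def indicator_times)
    qed
    show "(AE t in lebesgue. t \<in> {a<..<b} \<longrightarrow> integrable (distr (restrict_space \<nu> \<A>) borel (\<phi> t)) (liouville_integrand v \<iota> \<psi> e t)) \<and>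
        set_integrable lebesgue {a<..<b} (\<lambda>t. LINT x|distr (restrict_space \<nu> \<A>) borel (\<phi> t). liouville_integrand v \<iota> \<psi> e t x) \<and>
        (LINT t:{a<..<b}|lebesgue. (LINT x|distr (restrict_space \<nu> \<A>) borel (\<phi> t). liouville_integrand v \<iota> \<psi> e t x)) = 0"
    proof (intro conjI)
      show "AE t in lebesgue. t \<in> {a<..<b} \<longrightarrow> integrable (distr (restrict_space \<nu> \<A>) borel (\<phi> t)) (liouville_integrand v \<iota> \<psi> e t)"
        by (rule AE_I2) (use intt in blast)
      show "set_integrable lebesgue {a<..<b} (\<lambda>t. LINT x|distr (restrict_space \<nu> \<A>) borel (\<phi> t). liouville_integrand v \<iota> \<psi> e t x)"
        unfolding set_integrable_def by (simp only: eqall) (simp add: integrable_completion[OF glb] intg)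
      show "(LINT t:{a<..<b}|lebesgue. (LINT x|distr (restrict_space \<nu> \<A>) borel (\<phi> t). liouville_integrand v \<iota> \<psi> e t x)) = 0"
        unfolding set_lebesgue_integral_def by (simp only: eqall) (simp add: integral_completion[OF glb] totg)
    qed
  qed
  show ?thesis by (intro conjI liou C2 C3 C4)
qed
end
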